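(* $\mathrm{PoTF}_{\textsc{Min-Sum}}=\Theta(n)$, i.e., the price of temporal fairness with respect to the \textsc{Min-Sum} objective is both $O(n)$ and $\Omega(n)$ as a function of the number of agents $n$.
   Context: An instance $\mathcal{I}=(N,P,T,(\mathbf{D}_i)_{i\in N})$ has agents $N=[n]$, projects $P$, timesteps $T=[\ell]$, and disapproval sets $D_{ik}\subseteq P$ for $i\in N,k\in T$. An outcome is $\mathbf{o}=(o_1,\dots,o_\ell)\in P^\ell$; $\Pi(\mathcal{I})$ is the set of all outcomes. $d_i(\mathbf{o}^{(k)})=|\{t\in[k]:o_t\in D_{it}\}|$ and $d_i(\mathbf{o})=d_i(\mathbf{o}^{(\ell)})$. A set of constraints is $\mathbf{A}=\{(t_1,\lambda_1),\dots,(t_\tau,\lambda_\tau)\}$ with $t_j\in T$, $\lambda_j\in\{0,\dots,\ell\}$, $t_1\le\dots\le t_\tau$, $\lambda_1\le\dots\le\lambda_\tau$; $\Pi_{\mathbf{A}}(\mathcal{I})$ is the set of outcomes with $\max_{i\in N}d_i(\mathbf{o}^{(t)})\le\lambda$ for all $(t,\lambda)\in\mathbf{A}$, and $\mathbf{A}$ is feasible if $\Pi_{\mathbf{A}}(\mathcal{I})\neq\emptyset$. The \textsc{Min-Sum}-value of $\mathbf{o}$ is $\sum_{i\in N}d_i(\mathbf{o})$. The price of temporal fairness is $\mathrm{PoTF}_{\textsc{Min-Sum}}=\sup_{\mathcal{I},\mathbf{A}\text{ feasible}}\frac{\min_{\mathbf{o}\in\Pi_{\mathbf{A}}(\mathcal{I})}\sum_i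 d_i(\mathbf{o})}{\min_{\mathbf{o}\in\Pi(\mathcal{I})}\sum_i d_i(\mathbf{o})}$, considered as a function of $n$ (supremum over instances with $n$ agents). *)

theory Defs
  imports Complex_Main "HOL-Library.FuncSet" "HOL-Library.Extended_Real"
begin

text \<open>Agents are N = {1..n}, projects are a finite nonempty set P of naturals,
  timesteps are T = {1..l}; D i t is the disapproval set of agent i at timestep t.\<close>

definition agents :: "nat \<Rightarrow> nat set" where
  "agents n = {1..n}"

definition timesteps :: "nat \<Rightarrow> nat set" where
  "timesteps l = {1..l}"

definition valid_instance :: "nat \<Rightarrow> nat set \<Rightarrow> nat \<Rightarrow> (nat \<Rightarrow> nat \<Rightarrow> nat set) \<Rightarrow> bool" where
  "valid_instance n P l D \<longleftrightarrow> 1 \<le> n \<and> finite P \<and> P \<noteq> {} \<and>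
     (\<forall>i\<in>agents n. \<forall>t\<in>timesteps l. D i t \<subseteq> P)"

definition outcomes :: "nat set \<Rightarrow> nat \<Rightarrow> (nat \<Rightarrow> nat) set" where
  "outcomes P l = timesteps l \<rightarrow>\<^sub>E P"

definition disapp :: "(nat \<Rightarrow> nat \<Rightarrow> nat set) \<Rightarrow> nat \<Rightarrow> (nat \<Rightarrow> nat) \<Rightarrow> nat \<Rightarrow> nat" where
  "disapp D i out k = card {t \<in> {1..k}. out t \<in> D i t}"

definition valid_constraints :: "nat \<Rightarrow> (nat \<times> nat) list \<Rightarrow> bool" where
  "valid_constraints l A \<longleftrightarrow> (\<forall>(t,lam)\<in>set A. t \<in> timesteps l \<and> lam \<le> l) \<and>
     sorted (map fst A) \<and> sorted (map snd A)"

definition constrained_outcomes ::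
  "nat \<Rightarrow> nat set \<Rightarrow> nat \<Rightarrow> (nat \<Rightarrow> nat \<Rightarrow> nat set) \<Rightarrow> (nat \<times> nat) list \<Rightarrow> (nat \<Rightarrow> nat) set" where
  "constrained_outcomes n P l D A =
     {out \<in> outcomes P l. \<forall>(t,lam)\<in>set A. Max ((\<lambda>i. disapp D i out t) ` agents n) \<le> lam}"

definition feasible :: "nat \<Rightarrow> nat set \<Rightarrow> nat \<Rightarrow> (nat \<Rightarrow> nat \<Rightarrow> nat set) \<Rightarrow> (nat \<times> nat) list \<Rightarrow> bool" where
  "feasible n P l D A \<longleftrightarrow> constrained_outcomes n P l D A \<noteq> {}"

definition minsum_value :: "nat \<Rightarrow> nat \<Rightarrow> (nat \<Rightarrow> nat \<Rightarrow> nat set) \<Rightarrow> (nat \<Rightarrow> nat) \<Rightarrow> nat" where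
  "minsum_value n l D out = (\<Sum>i\<in>agents n. disapp D i out l)"

text \<open>Ratio of the constrained optimum to the unconstrained optimum (real division;
  if the unconstrained optimum is 0, the constrained one is 0 too, and the ratio is 0 by
  Isabelle's convention x/0 = 0, which does not affect the supremum).\<close>
definition potf_ratio ::
  "nat \<Rightarrow> nat set \<Rightarrow> nat \<Rightarrow> (nat \<Rightarrow> nat \<Rightarrow> nat set) \<Rightarrow> (nat \<times> nat) list \<Rightarrow> real" where
  "potf_ratio n P l D A =
     real (Min (minsum_value n l D ` constrained_outcomes n P l D A)) /
     real (Min (minsum_value n l D ` outcomes P l))"

definition PoTF_MinSum :: "nat \<Rightarrow> ereal" where
  "PoTF_MinSum n = (SUP x \<in> {(P, l, D, A). valid_instance n P l D \<and> valid_constraints l A \<and>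
                                   feasible n P l D A}.
                       ereal (case x of (P, l, D, A) \<Rightarrow> potf_ratio n P l D A))"

end

theory Submission
  imports Defs
begin

lemma finite_outcomes: "finite P \<Longrightarrow> finite (outcomes P l)"
  unfolding outcomes_def timesteps_def by (intro finite_PiE) auto

lemma Max_img_mono:
  assumes "finite A" "A \<noteq> {}" "\<And>i. i \<in> A \<Longrightarrow> f i \<le> (g i :: nat)"
  shows "Max (f ` A) \<le> Max (g ` A)"
  using assms by (subst Max_le_iff) (auto intro: order_trans[OF _ Max_ge])

lemma upper_ratio:
  assumes vi: "valid_instance n P l D" and fe: "feasible n P l D A"
  shows "potf_ratio n P l D A \<le> real n"
proof -
  from vi have n1: "1 \<le> n" and fP: "finite P" and nP: "P \<noteq> {}"
    by (auto simp: valid_instance_def)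
  obtain oA where oA: "oA \<in> constrained_outcomes n P l D A"
    using fe unfolding feasible_def by blast
  have oAo: "oA \<in> outcomes P l" using oA by (simp add: constrained_outcomes_def)
  have fin: "finite (minsum_value n l D ` outcomes P l)"
    using finite_outcomes[OF fP] by simp
  have ne: "outcomes P l \<noteq> {}" using oAo by blast
  obtain os where os: "os \<in> outcomes P l"
    and osmin: "minsum_value n l D os = Min (minsum_value n l D ` outcomes P l)"
  proof -
    have "Min (minsum_value n l D ` outcomes P l) \<in> minsum_value n l D ` outcomes P l"
      using fin ne by (intro Min_in) auto
    then show ?thesis using that by auto
  qed
  define good where "good t \<longleftrightarrow> (\<forall>i\<in>agents n. os t \<notin> D i t)" for t
  define o' where "o' t = (if good t then os t else oA t)" for t
  have o'o: "o' \<in> outcomes P l"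
    using os oAo unfolding outcomes_def o'_def by (auto simp: PiE_def extensional_def)
  have dle: "disapp D i o' k \<le> disapp D i oA k" if "i \<in> agents n" for i k
    unfolding disapp_def
    by (rule card_mono) (use that in \<open>auto simp: o'_def good_def split: if_splits\<close>)
  have o'c: "o' \<in> constrained_outcomes n P l D A"
  proof -
    have "\<forall>(t,lam)\<in>set A. Max ((\<lambda>i. disapp D i oA t) ` agents n) \<le> lam"
      using oA by (simp add: constrained_outcomes_def)
    moreover have "Max ((\<lambda>i. disapp D i o' t) ` agents n) \<le> Max ((\<lambda>i. disapp D i oA t) ` agents n)" for t
      using n1 dle by (intro Max_img_mono) (auto simp: agents_def)
    ultimately show ?thesis using o'o unfolding constrained_outcomes_def
      by (auto intro: order_trans)
  qed
  define B where "B = {t \<in> {1..l}. \<not> good t}"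
  have "minsum_value n l D o' \<le> (\<Sum>i\<in>agents n. card B)"
    unfolding minsum_value_def disapp_def
    by (intro sum_mono card_mono) (auto simp: B_def o'_def good_def)
  also have "\<dots> = n * card B" by (simp add: agents_def)
  also have "card B \<le> minsum_value n l D os"
  proof -
    have "B \<subseteq> (\<Union>i\<in>agents n. {t \<in> {1..l}. os t \<in> D i t})"
      by (auto simp: B_def good_def)
    hence "card B \<le> card (\<Union>i\<in>agents n. {t \<in> {1..l}. os t \<in> D i t})"
      by (intro card_mono) (auto simp: agents_def)
    also have "\<dots> \<le> (\<Sum>i\<in>agents n. card {t \<in> {1..l}. os t \<in> D i t})"
      by (rule card_UN_le) (simp add: agents_def)
    finally show ?thesis by (simp add: minsum_value_def disapp_def)
  qed
  hence "n * card B \<le> n * minsum_value n l D os" by simp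
  finally have key: "minsum_value n l D o' \<le> n * minsum_value n l D os" .
  have finc: "finite (minsum_value n l D ` constrained_outcomes n P l D A)"
    using finite_outcomes[OF fP] by (auto simp: constrained_outcomes_def)
  have "Min (minsum_value n l D ` constrained_outcomes n P l D A) \<le> minsum_value n l D o'"
    using finc o'c by (intro Min_le) auto
  with key osmin have main: "Min (minsum_value n l D ` constrained_outcomes n P l D A)
      \<le> n * Min (minsum_value n l D ` outcomes P l)" by simp
  show ?thesis
  proof (cases "Min (minsum_value n l D ` outcomes P l) = 0")
    case True then show ?thesis by (simp add: potf_ratio_def)
  next
    case False
    hence pos: "real (Min (minsum_value n l D ` outcomes P l)) > 0" by simp
    have "real (Min (minsum_value n l D ` constrained_outcomes n P l D A))
       \<le> real n * real (Min (minsum_value n l D ` outcomes P l))"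
      using main by (metis of_nat_le_iff of_nat_mult)
    thus ?thesis unfolding potf_ratio_def using pos by (simp add: divide_le_eq)
  qed
qed


definition Dex :: "nat \<Rightarrow> nat \<Rightarrow> nat set" where
  "Dex i t = (if t = 1 then (if i = 1 then {0} else {1}) else (if i = 1 then {0,1} else {}))"

lemma lower_ratio:
  assumes n2: "2 \<le> n"
  shows "valid_instance n {0,1} 2 Dex \<and> valid_constraints 2 [(2,1)] \<and>
         feasible n {0,1} 2 Dex [(2,1)] \<and> real n / 2 \<le> potf_ratio n {0,1} 2 Dex [(2,1)]"
proof -
  define ob :: "nat \<Rightarrow> nat" where "ob t = (if t \<in> {1..2} then 1 else undefined)" for t
  define oa :: "nat \<Rightarrow> nat" where "oa t = (if t \<in> {1..2} then 0 else undefined)" for t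
  have ag: "agents n = insert 1 {2..n}" using n2 by (auto simp: agents_def)
  have obo: "ob \<in> outcomes {0,1} 2" by (auto simp: outcomes_def timesteps_def ob_def)
  have oao: "oa \<in> outcomes {0,1} 2" by (auto simp: outcomes_def timesteps_def oa_def)
  have d2: "{1..2::nat} = {1,2}" by auto
  have dis2: "disapp Dex i out 2 = card {t \<in> {1,2}. out t \<in> Dex i t}" for i out
    unfolding disapp_def d2 by (rule refl)
  have ob1: "disapp Dex 1 ob 2 = 1"
  proof -
    have "{t \<in> {1,2}. ob t \<in> Dex 1 t} = {2}" by (auto simp: ob_def Dex_def)
    thus ?thesis by (simp add: dis2)
  qed
  have obi: "i \<noteq> 1 \<Longrightarrow> disapp Dex i ob 2 = 1" for i
  proof -
    assume "i \<noteq> 1"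
    hence "{t \<in> {1,2}. ob t \<in> Dex i t} = {1}" by (auto simp: ob_def Dex_def)
    thus ?thesis by (simp add: dis2)
  qed
  have obc: "ob \<in> constrained_outcomes n {0,1} 2 Dex [(2,1)]"
    using obo ob1 obi n2 by (auto simp: constrained_outcomes_def ag Max_le_iff)
  have oa1: "disapp Dex 1 oa 2 = 2"
  proof -
    have "{t \<in> {1,2}. oa t \<in> Dex 1 t} = {1,2}" by (auto simp: oa_def Dex_def)
    thus ?thesis by (simp add: dis2)
  qed
  have oai: "i \<noteq> 1 \<Longrightarrow> disapp Dex i oa 2 = 0" for i
  proof -
    assume "i \<noteq> 1"
    hence "{t \<in> {1,2}. oa t \<in> Dex i t} = {}" by (auto simp: oa_def Dex_def)
    thus ?thesis by (simp add: dis2)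
  qed
  have oasum: "minsum_value n 2 Dex oa = 2"
    unfolding minsum_value_def ag using oa1 oai by (simp add: sum.insert)
  (* every outcome: agent 1 disapproves at time 2 *)
  have pos: "minsum_value n 2 Dex out \<ge> 1" if "out \<in> outcomes {0,1} 2" for out
  proof -
    have "out 2 \<in> {0,1}" using that by (auto simp: outcomes_def timesteps_def)
    hence "2 \<in> {t \<in> {1,2}. out t \<in> Dex 1 t}" by (auto simp: Dex_def)
    hence "card {2::nat} \<le> card {t \<in> {1,2}. out t \<in> Dex 1 t}"
      by (intro card_mono) auto
    hence "card {t \<in> {1,2}. out t \<in> Dex 1 t} \<ge> 1" by simp
    hence "disapp Dex 1 out 2 \<ge> 1" by (simp add: dis2)
    thus ?thesis unfolding minsum_value_def ag by (simp add: sum.insert)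
  qed
  have cons: "minsum_value n 2 Dex out \<ge> n" if "out \<in> constrained_outcomes n {0,1} 2 Dex [(2,1)]" for out
  proof -
    have oo: "out \<in> outcomes {0,1} 2" and mx: "Max ((\<lambda>i. disapp Dex i out 2) ` agents n) \<le> 1"
      using that by (auto simp: constrained_outcomes_def)
    have fa: "finite (agents n)" by (simp add: agents_def)
    have le1: "disapp Dex 1 out 2 \<le> 1"
      using mx fa by (subst (asm) Max_le_iff) (auto simp: ag)
    have r: "out 1 \<in> {0,1}" "out 2 \<in> {0,1}" using oo by (auto simp: outcomes_def timesteps_def)
    have o1: "out 1 = 1"
    proof (rule ccontr)
      assume "out 1 \<noteq> 1"
      hence "{t \<in> {1,2}. out t \<in> Dex 1 t} = {1,2}" using r by (auto simp: Dex_def)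
      thus False using le1 by (simp add: dis2)
    qed
    have a1: "disapp Dex 1 out 2 \<ge> 1"
    proof -
      have "{t \<in> {1,2}. out t \<in> Dex 1 t} = {2}" using r o1 by (auto simp: Dex_def)
      thus ?thesis by (simp add: dis2)
    qed
    have ai: "disapp Dex i out 2 \<ge> 1" if "i \<noteq> 1" for i
    proof -
      have "1 \<in> {t \<in> {1,2}. out t \<in> Dex i t}" using o1 that by (auto simp: Dex_def)
      hence "card {1::nat} \<le> card {t \<in> {1,2}. out t \<in> Dex i t}"
        by (intro card_mono) auto
      hence "card {t \<in> {1,2}. out t \<in> Dex i t} \<ge> 1" by simp
      thus ?thesis by (simp add: dis2)
    qed
    have "(\<Sum>i\<in>{2..n}. disapp Dex i out 2) \<ge> (\<Sum>i\<in>{2..n}. 1)"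
      by (intro sum_mono ai) auto
    hence "(\<Sum>i\<in>{2..n}. disapp Dex i out 2) \<ge> n - 1" by simp
    thus ?thesis unfolding minsum_value_def ag using a1 n2 by (simp add: sum.insert)
  qed
  have finO: "finite (outcomes {0::nat,1} 2)" by (rule finite_outcomes) simp
  have finC: "finite (constrained_outcomes n {0,1} 2 Dex [(2,1)])"
    using finO by (rule rev_finite_subset) (auto simp: constrained_outcomes_def)
  have Mc: "Min (minsum_value n 2 Dex ` constrained_outcomes n {0,1} 2 Dex [(2,1)]) \<ge> n"
    using finC obc cons by (subst Min_ge_iff) auto
  have Mu1: "Min (minsum_value n 2 Dex ` outcomes {0,1} 2) \<le> 2"
  proof -
    have "Min (minsum_value n 2 Dex ` outcomes {0,1} 2) \<le> minsum_value n 2 Dex oa"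
      using finO oao by (intro Min_le) auto
    thus ?thesis using oasum by simp
  qed
  have Mu2: "Min (minsum_value n 2 Dex ` outcomes {0,1} 2) \<ge> 1"
    using finO oao pos by (subst Min_ge_iff) auto
  have ratio: "real n / 2 \<le> potf_ratio n {0,1} 2 Dex [(2,1)]"
  proof -
    let ?a = "real (Min (minsum_value n 2 Dex ` constrained_outcomes n {0,1} 2 Dex [(2,1)]))"
    let ?b = "real (Min (minsum_value n 2 Dex ` outcomes {0,1} 2))"
    have "?a \<ge> n" "?b \<le> 2" "?b \<ge> 1" using Mc Mu1 Mu2 by simp_all
    hence "real n / 2 \<le> ?a / ?b"
      by (intro frac_le) auto
    thus ?thesis by (simp add: potf_ratio_def)
  qed
  show ?thesis
    using n2 obc ratio
    by (auto simp: valid_instance_def valid_constraints_def feasible_def timesteps_def Dex_def agents_def)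
qed

theorem theorem7:
  shows "\<exists>c C. c > 0 \<and> C > 0 \<and>
    (\<forall>\<^sub>F n in sequentially.
        ereal (c * real n) \<le> PoTF_MinSum n \<and> PoTF_MinSum n \<le> ereal (C * real n))"
proof (intro exI conjI)
  show "(1/2::real) > 0" "(1::real) > 0" by simp_all
  show "\<forall>\<^sub>F n in sequentially.
        ereal (1/2 * real n) \<le> PoTF_MinSum n \<and> PoTF_MinSum n \<le> ereal (1 * real n)"
    using eventually_ge_at_top[of "2::nat"]
  proof eventually_elim
    case (elim n)
    note L = lower_ratio[OF elim]
    have "ereal (1/2 * real n) \<le> PoTF_MinSum n"
      unfolding PoTF_MinSum_def
      by (rule SUP_upper2[where i="({0,1}, 2, Dex, [(2,1)])"]) (use L in auto)
    moreover have "PoTF_MinSum n \<le> ereal (1 * real n)"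
      unfolding PoTF_MinSum_def
      by (rule SUP_least) (auto intro: upper_ratio)
    ultimately show ?case by simp
  qed
qed

end
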